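(* Let $m,n\ge 1$, let $\lambda_1,\dots,\lambda_m>0$ and $d_1,\dots,d_n\in\mathbb{R}$, and let $\Phi\in\mathbb{C}^{m\times n}$ be the matrix with entries $\Phi_{kj}=e^{2\pi i d_j/\lambda_k}$. Let $v\in\mathbb{C}^m$, let $\epsilon>0$, and let $C\in\mathbb{R}^{2m\times 2m}$ be a symmetric positive definite (covariance) matrix. For a complex matrix $M\in\mathbb{C}^{m\times n}$ and a complex vector $w\in\mathbb{C}^m$, consider the optimization problem $$P(M,w):\quad \min_{x\in\mathbb{R}^n,\ x\ge 0}\ \|x\|_1 \quad\text{subject to}\quad (\widetilde{M}x-\widetilde{w})^T C^{-1}(\widetilde{M}x-\widetilde{w})\le \epsilon^2\|\widetilde{w}\|^2,$$ where $\widetilde{w}=\begin{pmatrix}\mathrm{Re}\,w\\ \mathrm{Im}\,w\end{pmatrix}\in\mathbb{R}^{2m}$ and $\widetilde{M}=\begin{pmatrix}\mathrm{Re}\,M\\ \mathrm{Im}\,M\end{pmatrix}\in\mathbb{R}^{2m\times n}$ (real and imaginary parts stacked), $x\ge 0$ is meant entrywise, and $\|\cdot\|$ is the Euclidean norm. For $s>0$ and $\Delta\in\mathbb{R}$ define the $m\times m$ complex diagonal matrix $$F_{s,\Delta}=s\cdot\mathrm{diag}\big(e^{-2\pi i\Delta/\lambda_1},\dots,e^{-2\pi i\Delta/\lambda_m}\big).$$ Let $x^*$ be the solution of $P(\Phi,v)$, and let $x^*_{s,\Delta}$ be the solution of $P(F_{s,\Delta}\Phi,\,F_{s,\Delta}v)$.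 Suppose that $C$ is diagonal and satisfies $C_{jj}=C_{j+m,j+m}$ for $j=1,\dots,m$. Then $x^*_{s,\Delta}=x^*$.
   Context: This arises in Time-of-Flight depth sensing: $v$ is the complex sensor measurement at $m$ modulation frequencies, $\lambda_k$ is half the wavelength of the $k$-th modulation frequency, $d_j$ ranges over a discretized set of candidate path distances, and $x$ (the "backscattering") gives nonnegative return strengths at those distances, so that ideally $v=\Phi x$ plus Gaussian noise with covariance $C$ on the stacked real representation. *)

theory Defs
  imports "HOL-Analysis.Analysis"
begin

text \<open>Complex vectors in C^m are complex^'m, complex m x n matrices are complex^'n^'m.
  The real 2m-dimensional space is indexed by the sum type 'm + 'm:
  Inl k is the k-th real part, Inr k the k-th imaginary part.\<close>

definition stack_vec :: "complex^'m \<Rightarrow> real^('m + 'm)" where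
  "stack_vec w = (\<chi> i. case i of Inl k \<Rightarrow> Re (w $ k) | Inr k \<Rightarrow> Im (w $ k))"

definition stack_mat :: "complex^'n^'m \<Rightarrow> real^'n^('m + 'm)" where
  "stack_mat M = (\<chi> i j. case i of Inl k \<Rightarrow> Re (M $ k $ j) | Inr k \<Rightarrow> Im (M $ k $ j))"

definition l1norm :: "real^'n \<Rightarrow> real" where
  "l1norm x = (\<Sum>j\<in>UNIV. \<bar>x $ j\<bar>)"

definition nonneg_vec :: "real^'n \<Rightarrow> bool" where
  "nonneg_vec x \<longleftrightarrow> (\<forall>j. 0 \<le> x $ j)"

definition feasible ::
  "real^('m+'m)^('m+'m) \<Rightarrow> real \<Rightarrow> complex^'n^'m \<Rightarrow> complex^'m \<Rightarrow> real^'n \<Rightarrow> bool" where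
  "feasible C \<epsilon> M w x \<longleftrightarrow> nonneg_vec x \<and>
     (let r = stack_mat M *v x - stack_vec w in
        r \<bullet> (matrix_inv C *v r) \<le> \<epsilon>\<^sup>2 * (norm (stack_vec w))\<^sup>2)"

definition is_solution ::
  "real^('m+'m)^('m+'m) \<Rightarrow> real \<Rightarrow> complex^'n^'m \<Rightarrow> complex^'m \<Rightarrow> real^'n \<Rightarrow> bool" where
  "is_solution C \<epsilon> M w x \<longleftrightarrow> feasible C \<epsilon> M w x \<and>
     (\<forall>y. feasible C \<epsilon> M w y \<longrightarrow> l1norm x \<le> l1norm y)"

definition Phi_mat :: "real^'m \<Rightarrow> real^'n \<Rightarrow> complex^'n^'m" where
  "Phi_mat lam d = (\<chi> k j. exp (2 * of_real pi * \<i> * of_real (d $ j) / of_real (lam $ k)))"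

definition F_mat :: "real^'m \<Rightarrow> real \<Rightarrow> real \<Rightarrow> complex^'m^'m" where
  "F_mat lam s \<Delta> = (\<chi> k l. if k = l
      then of_real s * exp (- 2 * of_real pi * \<i> * of_real \<Delta> / of_real (lam $ k)) else 0)"

end

theory Submission imports Defs begin

definition cmv :: "complex^'n^'m \<Rightarrow> real^'n \<Rightarrow> complex^'m" where
  "cmv M x = (\<chi> k. \<Sum>j\<in>UNIV. M$k$j * of_real (x$j))"

lemma sum_plus_univ:
  "(\<Sum>i\<in>(UNIV::('a::finite+'b::finite) set). g i) = (\<Sum>k\<in>UNIV. g (Inl k)) + (\<Sum>k\<in>UNIV. g (Inr k))"
proof -
  have "(\<Sum>i\<in>(UNIV::('a+'b) set). g i) = sum g (UNIV <+> UNIV)" by simp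
  also have "\<dots> = (\<Sum>k\<in>UNIV. g (Inl k)) + (\<Sum>k\<in>UNIV. g (Inr k))"
    by (subst sum.Plus) (auto simp: o_def)
  finally show ?thesis .
qed

lemma stack_res: "stack_mat M *v x - stack_vec w = stack_vec (cmv M x - w)"
  by (auto simp: vec_eq_iff stack_mat_def stack_vec_def cmv_def matrix_vector_mult_def Re_sum Im_sum
      split: sum.splits)

lemma norm_stack: "(norm (stack_vec w))\<^sup>2 = (\<Sum>k\<in>UNIV. (cmod (w$k))\<^sup>2)"
proof -
  have "(norm (stack_vec w))\<^sup>2 = stack_vec w \<bullet> stack_vec w" by (simp add: power2_norm_eq_inner)
  also have "\<dots> = (\<Sum>k\<in>UNIV. (Re (w$k))\<^sup>2 + (Im (w$k))\<^sup>2)"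
    by (simp add: inner_vec_def sum_plus_univ stack_vec_def sum.distrib power2_eq_square)
  also have "\<dots> = (\<Sum>k\<in>UNIV. (cmod (w$k))\<^sup>2)"
    by (simp only: cmod_power2)
  finally show ?thesis .
qed

lemma diag_quad:
  fixes D :: "real^'a^'a"
  assumes "\<forall>i j. i \<noteq> j \<longrightarrow> D$i$j = 0"
  shows "r \<bullet> (D *v r) = (\<Sum>i\<in>UNIV. D$i$i * (r$i)\<^sup>2)"
proof -
  have "r \<bullet> (D *v r) = (\<Sum>i\<in>UNIV. r$i * (\<Sum>j\<in>UNIV. D$i$j * r$j))"
    by (simp add: inner_vec_def matrix_vector_mult_def)
  also have "\<dots> = (\<Sum>i\<in>UNIV. r$i * (\<Sum>j\<in>UNIV. if j = i then D$i$i * r$i else 0))"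
    by (intro sum.cong refl arg_cong2[where f="(*)"]) (use assms in auto)
  also have "\<dots> = (\<Sum>i\<in>UNIV. D$i$i * (r$i)\<^sup>2)"
    by (simp add: power2_eq_square mult_ac)
  finally show ?thesis .
qed

lemma inv_diag:
  fixes C :: "real^'a^'a"
  assumes pd: "\<forall>z. z \<noteq> 0 \<longrightarrow> 0 < z \<bullet> (C *v z)"
    and diag: "\<forall>i j. i \<noteq> j \<longrightarrow> C $ i $ j = 0"
  shows "matrix_inv C = (\<chi> i j. if i = j then inverse (C$i$i) else 0)" and "\<And>i. 0 < C$i$i"
proof -
  show pos: "0 < C$i$i" for i
  proof -
    have "axis i (1::real) \<noteq> 0" by (simp add: axis_eq_0_iff)
    then have "0 < axis i 1 \<bullet> (C *v axis i 1)" using pd by blast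
    also have "axis i 1 \<bullet> (C *v axis i 1) = C$i$i"
      by (simp add: diag_quad[OF diag] axis_def if_distrib[of "\<lambda>x. x^2"] if_distrib[of "\<lambda>x. C$_$_ * x"] cong: if_cong)
    finally show ?thesis .
  qed
  define D :: "real^'a^'a" where "D = (\<chi> i j. if i = j then inverse (C$i$i) else 0)"
  have CD: "C ** D = mat 1"
  proof -
    have "(C ** D)$i$j = (if i = j then 1 else 0)" for i j
    proof -
      have "(C ** D)$i$j = (\<Sum>k\<in>UNIV. if k = i then C$i$i * D$i$j else 0)"
        unfolding matrix_matrix_mult_def vec_lambda_beta by (rule sum.cong) (auto simp: diag)
      also have "\<dots> = (if i = j then 1 else 0)" using pos[of i] by (auto simp: D_def)
      finally show ?thesis .
    qed
    then show ?thesis by (simp add: vec_eq_iff mat_def)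
  qed
  have DC: "D ** C = mat 1"
  proof -
    have "(D ** C)$i$j = (if i = j then 1 else 0)" for i j
    proof -
      have "(D ** C)$i$j = (\<Sum>k\<in>UNIV. if k = i then D$i$i * C$i$j else 0)"
        unfolding matrix_matrix_mult_def vec_lambda_beta by (rule sum.cong) (auto simp: D_def)
      also have "\<dots> = (if i = j then 1 else 0)" using pos[of i] diag by (auto simp: D_def)
      finally show ?thesis .
    qed
    then show ?thesis by (simp add: vec_eq_iff mat_def)
  qed
  have "C ** matrix_inv C = mat 1 \<and> matrix_inv C ** C = mat 1"
    unfolding matrix_inv_def by (rule someI[of _ D]) (use CD DC in auto)
  then have "matrix_inv C = matrix_inv C ** (C ** D)" using CD by simp
  also have "\<dots> = D" using \<open>C ** matrix_inv C = mat 1 \<and> matrix_inv C ** C = mat 1\<close>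
    by (simp add: matrix_mul_assoc)
  finally show "matrix_inv C = (\<chi> i j. if i = j then inverse (C$i$i) else 0)" by (simp add: D_def)
qed

lemma quad_form:
  fixes C :: "real^('m::finite+'m)^('m+'m)"
  assumes pd: "\<forall>z. z \<noteq> 0 \<longrightarrow> 0 < z \<bullet> (C *v z)"
    and diag: "\<forall>i j. i \<noteq> j \<longrightarrow> C $ i $ j = 0"
    and eq: "\<forall>j. C $ Inl j $ Inl j = C $ Inr j $ Inr j"
  shows "stack_vec u \<bullet> (matrix_inv C *v stack_vec u) = (\<Sum>k\<in>UNIV. inverse (C$Inl k$Inl k) * (cmod (u$k))\<^sup>2)"
proof -
  have "stack_vec u \<bullet> (matrix_inv C *v stack_vec u) =
     (\<Sum>i\<in>UNIV. matrix_inv C$i$i * (stack_vec u$i)\<^sup>2)"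
    by (rule diag_quad) (simp add: inv_diag[OF pd diag])
  also have "\<dots> = (\<Sum>k\<in>UNIV. inverse (C$Inl k$Inl k) * ((Re (u$k))\<^sup>2 + (Im (u$k))\<^sup>2))"
    by (simp add: inv_diag[OF pd diag] sum_plus_univ stack_vec_def eq sum.distrib distrib_left)
  also have "\<dots> = (\<Sum>k\<in>UNIV. inverse (C$Inl k$Inl k) * (cmod (u$k))\<^sup>2)"
    by (simp only: cmod_power2)
  finally show ?thesis .
qed

definition fco :: "real^'m \<Rightarrow> real \<Rightarrow> real \<Rightarrow> 'm \<Rightarrow> complex" where
  "fco lam s \<Delta> k = of_real s * exp (- 2 * of_real pi * \<i> * of_real \<Delta> / of_real (lam $ k))"

lemma F_mult: "(F_mat lam s \<Delta> ** M)$k$j = fco lam s \<Delta> k * M$k$j"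
proof -
  have "(F_mat lam s \<Delta> ** M)$k$j = (\<Sum>l\<in>UNIV. if l = k then fco lam s \<Delta> k * M$k$j else 0)"
    unfolding matrix_matrix_mult_def vec_lambda_beta by (rule sum.cong) (auto simp: F_mat_def fco_def)
  then show ?thesis by simp
qed

lemma F_vec: "(F_mat lam s \<Delta> *v u)$k = fco lam s \<Delta> k * u$k"
proof -
  have "(F_mat lam s \<Delta> *v u)$k = (\<Sum>l\<in>UNIV. if l = k then fco lam s \<Delta> k * u$k else 0)"
    unfolding matrix_vector_mult_def vec_lambda_beta by (rule sum.cong) (auto simp: F_mat_def fco_def)
  then show ?thesis by simp
qed

lemma cmv_F: "cmv (F_mat lam s \<Delta> ** M) x - F_mat lam s \<Delta> *v w = F_mat lam s \<Delta> *v (cmv M x - w)"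
  by (simp add: vec_eq_iff F_vec F_mult cmv_def sum_distrib_left algebra_simps)

lemma cmod_fco: "0 < s \<Longrightarrow> cmod (fco lam s \<Delta> k) = s"
  by (simp add: fco_def norm_mult norm_exp_eq_Re)

lemma feas_eq:
  fixes C :: "real^('m::finite+'m)^('m+'m)"
  assumes pd: "\<forall>z. z \<noteq> 0 \<longrightarrow> 0 < z \<bullet> (C *v z)"
    and diag: "\<forall>i j. i \<noteq> j \<longrightarrow> C $ i $ j = 0"
    and eq: "\<forall>j. C $ Inl j $ Inl j = C $ Inr j $ Inr j"
    and s: "0 < s"
  shows "feasible C \<epsilon> (F_mat lam s \<Delta> ** M) (F_mat lam s \<Delta> *v w) x \<longleftrightarrow> feasible C \<epsilon> M w x"
proof -
  define u where "u = cmv M x - w"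
  let ?c = "\<lambda>k. inverse (C$Inl k$Inl k)"
  have A: "(\<Sum>k\<in>UNIV. ?c k * (cmod ((F_mat lam s \<Delta> *v u)$k))\<^sup>2) = s\<^sup>2 * (\<Sum>k\<in>UNIV. ?c k * (cmod (u$k))\<^sup>2)"
    by (simp add: F_vec norm_mult cmod_fco[OF s] sum_distrib_left power_mult_distrib mult_ac)
  have B: "(\<Sum>k\<in>UNIV. (cmod ((F_mat lam s \<Delta> *v w)$k))\<^sup>2) = s\<^sup>2 * (\<Sum>k\<in>UNIV. (cmod (w$k))\<^sup>2)"
    by (simp add: F_vec norm_mult cmod_fco[OF s] sum_distrib_left power_mult_distrib mult_ac)
  have s2: "0 < s\<^sup>2" using s by simp
  have "(s\<^sup>2 * X \<le> \<epsilon>\<^sup>2 * (s\<^sup>2 * Y)) = (X \<le> \<epsilon>\<^sup>2 * Y)" for X Y :: real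
    using s2 by (metis mult.left_commute mult_le_cancel_left_pos)
  then show ?thesis
    unfolding feasible_def Let_def stack_res cmv_F quad_form[OF pd diag eq] norm_stack A B u_def[symmetric]
    by simp
qed


theorem theorem1:
  fixes lam :: "real^'m" and d :: "real^'n" and v :: "complex^'m"
    and \<epsilon> s \<Delta> :: real and C :: "real^('m+'m)^('m+'m)"
    and xstar xs :: "real^'n"
  assumes lam_pos: "\<forall>k. 0 < lam $ k"
    and eps_pos: "0 < \<epsilon>"
    and s_pos: "0 < s"
    and C_sym: "transpose C = C"
    and C_pd: "\<forall>z. z \<noteq> 0 \<longrightarrow> 0 < z \<bullet> (C *v z)"
    and C_diag: "\<forall>i j. i \<noteq> j \<longrightarrow> C $ i $ j = 0"
    and C_eq: "\<forall>j. C $ Inl j $ Inl j = C $ Inr j $ Inr j"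
    and xstar_sol: "is_solution C \<epsilon> (Phi_mat lam d) v xstar"
    and xstar_uniq: "\<forall>y. is_solution C \<epsilon> (Phi_mat lam d) v y \<longrightarrow> y = xstar"
    and xs_sol: "is_solution C \<epsilon> (F_mat lam s \<Delta> ** Phi_mat lam d) (F_mat lam s \<Delta> *v v) xs"
    and xs_uniq: "\<forall>y. is_solution C \<epsilon> (F_mat lam s \<Delta> ** Phi_mat lam d) (F_mat lam s \<Delta> *v v) y \<longrightarrow> y = xs"
  shows "xs = xstar"
proof -
  have "feasible C \<epsilon> (F_mat lam s \<Delta> ** Phi_mat lam d) (F_mat lam s \<Delta> *v v) = feasible C \<epsilon> (Phi_mat lam d) v"
    using feas_eq[OF C_pd C_diag C_eq s_pos] by blast
  then have "is_solution C \<epsilon> (F_mat lam s \<Delta> ** Phi_mat lam d) (F_mat lam s \<Delta> *v v) = is_solution C \<epsilon> (Phi_mat lam d) v"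
    unfolding is_solution_def by simp
  then show ?thesis using xs_sol xstar_uniq by simp
qed

end
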